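(* Let $\mathcal{H}$ be a two-sided quaternionic Hilbert space whose inner product $\langle\cdot,\cdot\rangle$ satisfies in addition $\langle u,\lambda v\rangle=\langle\bar\lambda u,v\rangle$ for all $u,v\in\mathcal{H}$, $\lambda\in\mathbb{H}$. Then for each $n\ge1$ the formula $$\langle u_1\otimes\cdots\otimes u_n,\ v_1\otimes\cdots\otimes v_n\rangle=\langle\langle\cdots\langle\langle\langle u_1,v_1\rangle u_2,v_2\rangle u_3,v_3\rangle\cdots\rangle u_n,v_n\rangle$$ (extended additively) defines a quaternionic inner product on $\mathcal{H}^{\otimes n}$, which moreover satisfies the same additional property $\langle x,\lambda y\rangle=\langle\bar\lambda x,y\rangle$ for $x,y\in\mathcal{H}^{\otimes n}$, $\lambda\in\mathbb{H}$.
   Context: $\mathbb{H}$ denotes the quaternions. A quaternionic inner product on a right (or two-sided) $\mathbb{H}$-vector space $V$ is a map $\langle\cdot,\cdot\rangle:V\times V\to\mathbb{H}$ which is additive in each argument, satisfies $\langle u\alpha,v\beta\rangle=\bar\beta\langle u,v\rangle\alpha$ for $\alpha,\beta\in\mathbb{H}$, $\langle v,u\rangle=\overline{\langle u,v\rangle}$, and $\langle u,u\rangle\ge0$ with equality only for $u=0$. A two-sided quaternionic Hilbert space is an $\mathbb{H}$-bimodule with such an inner product, complete for the induced norm. $\mathcal{H}^{\otimes n}=\mathcal{H}\otimes_{\mathbb{H}}\cdots\otimes_{\mathbb{H}}\mathcal{H}$ ($n$ factors) is the tensor product of $\mathbb{H}$-bimodules (so $u\lambda\otimes v=u\otimes\lambda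 v$), itself an $\mathbb{H}$-bimodule with $\lambda(u_1\otimes\cdots\otimes u_n)=(\lambda u_1)\otimes\cdots\otimes u_n$ and $(u_1\otimes\cdots\otimes u_n)\lambda=u_1\otimes\cdots\otimes(u_n\lambda)$. In the formula, $\langle u_1,v_1\rangle u_2$ denotes left multiplication of $u_2$ by the quaternion $\langle u_1,v_1\rangle$. *)

theory Defs
  imports Complex_Main
begin

datatype quat = Quat (qRe: real) (qI: real) (qJ: real) (qK: real)

instantiation quat :: ring_1
begin
definition "0 = Quat 0 0 0 0"
definition "1 = Quat 1 0 0 0"
definition "p + q = Quat (qRe p + qRe q) (qI p + qI q) (qJ p + qJ q) (qK p + qK q)"
definition "p - q = Quat (qRe p - qRe q) (qI p - qI q) (qJ p - qJ q) (qK p - qK q)"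
definition "- p = Quat (- qRe p) (- qI p) (- qJ p) (- qK p)"
definition "p * q = Quat
   (qRe p * qRe q - qI p * qI q - qJ p * qJ q - qK p * qK q)
   (qRe p * qI q + qI p * qRe q + qJ p * qK q - qK p * qJ q)
   (qRe p * qJ q - qI p * qK q + qJ p * qRe q + qK p * qI q)
   (qRe p * qK q + qI p * qJ q - qJ p * qI q + qK p * qRe q)"
instance
  by standard (auto simp: zero_quat_def one_quat_def plus_quat_def minus_quat_def
      uminus_quat_def times_quat_def algebra_simps)
end

definition qcnj :: "quat \<Rightarrow> quat" where
  "qcnj q = Quat (qRe q) (- qI q) (- qJ q) (- qK q)"

definition qnonneg :: "quat \<Rightarrow> bool" where
  "qnonneg q \<longleftrightarrow> qI q = 0 \<and> qJ q = 0 \<and> qK q = 0 \<and> qRe q \<ge> 0"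

definition bimodule :: "(quat \<Rightarrow> 'v::ab_group_add \<Rightarrow> 'v) \<Rightarrow> ('v \<Rightarrow> quat \<Rightarrow> 'v) \<Rightarrow> bool" where
  "bimodule lm rm \<longleftrightarrow>
     (\<forall>a b u. lm (a * b) u = lm a (lm b u)) \<and> (\<forall>u. lm 1 u = u) \<and>
     (\<forall>a b u. lm (a + b) u = lm a u + lm b u) \<and> (\<forall>a u v. lm a (u + v) = lm a u + lm a v) \<and>
     (\<forall>a b u. rm u (a * b) = rm (rm u a) b) \<and> (\<forall>u. rm u 1 = u) \<and>
     (\<forall>a b u. rm u (a + b) = rm u a + rm u b) \<and> (\<forall>a u v. rm (u + v) a = rm u a + rm v a) \<and>
     (\<forall>a b u. rm (lm a u) b = lm a (rm u b))"

definition is_qip :: "'w set \<Rightarrow> ('w \<Rightarrow> 'w \<Rightarrow> 'w) \<Rightarrow> 'w \<Rightarrow> ('w \<Rightarrow> quat \<Rightarrow> 'w)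
    \<Rightarrow> ('w \<Rightarrow> 'w \<Rightarrow> quat) \<Rightarrow> bool" where
  "is_qip S add z rm ip \<longleftrightarrow>
     (\<forall>u\<in>S. \<forall>v\<in>S. \<forall>w\<in>S. ip (add u v) w = ip u w + ip v w \<and> ip u (add v w) = ip u v + ip u w) \<and>
     (\<forall>u\<in>S. \<forall>v\<in>S. \<forall>\<alpha> \<beta>. ip (rm u \<alpha>) (rm v \<beta>) = qcnj \<beta> * ip u v * \<alpha>) \<and>
     (\<forall>u\<in>S. \<forall>v\<in>S. ip v u = qcnj (ip u v)) \<and>
     (\<forall>u\<in>S. qnonneg (ip u u) \<and> (ip u u = 0 \<longrightarrow> u = z))"

definition hnorm :: "('v \<Rightarrow> 'v \<Rightarrow> quat) \<Rightarrow> 'v \<Rightarrow> real" where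
  "hnorm ip u = sqrt (qRe (ip u u))"

definition hcomplete :: "('v::ab_group_add \<Rightarrow> 'v \<Rightarrow> quat) \<Rightarrow> bool" where
  "hcomplete ip \<longleftrightarrow> (\<forall>x :: nat \<Rightarrow> 'v.
     (\<forall>e>0. \<exists>N. \<forall>m\<ge>N. \<forall>k\<ge>N. hnorm ip (x m - x k) < e) \<longrightarrow>
     (\<exists>l. (\<lambda>k. hnorm ip (x k - l)) \<longlonglongrightarrow> 0))"

definition two_sided_qhs :: "(quat \<Rightarrow> 'v::ab_group_add \<Rightarrow> 'v) \<Rightarrow> ('v \<Rightarrow> quat \<Rightarrow> 'v)
    \<Rightarrow> ('v \<Rightarrow> 'v \<Rightarrow> quat) \<Rightarrow> bool" where
  "two_sided_qhs lm rm ip \<longleftrightarrow> bimodule lm rm \<and> is_qip UNIV (+) 0 rm ip \<and> hcomplete ip"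

text \<open>Free abelian group on n-tuples (lists of length n): finitely supported integer
  functions on lists, supported on lists of length n.\<close>
definition fsums :: "nat \<Rightarrow> ('v list \<Rightarrow> int) set" where
  "fsums n = {f. finite {xs. f xs \<noteq> 0} \<and> (\<forall>xs. f xs \<noteq> 0 \<longrightarrow> length xs = n)}"

definition pt :: "'v list \<Rightarrow> 'v list \<Rightarrow> int" where
  "pt xs = (\<lambda>ys. if ys = xs then 1 else 0)"

text \<open>Generators of the relations: additivity in each slot, and u\<lambda> \<otimes> v = u \<otimes> \<lambda>v.\<close>
definition tgens :: "(quat \<Rightarrow> 'v::ab_group_add \<Rightarrow> 'v) \<Rightarrow> ('v \<Rightarrow> quat \<Rightarrow> 'v) \<Rightarrow> nat
    \<Rightarrow> ('v list \<Rightarrow> int) set" where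
  "tgens lm rm n =
     {(\<lambda>ys. pt (as @ [x + y] @ bs) ys - pt (as @ [x] @ bs) ys - pt (as @ [y] @ bs) ys)
        | as bs x y. length as + length bs + 1 = n} \<union>
     {(\<lambda>ys. pt (as @ [rm x a, y] @ bs) ys - pt (as @ [x, lm a y] @ bs) ys)
        | as bs x y a. length as + length bs + 2 = n}"

inductive_set trel :: "(quat \<Rightarrow> 'v::ab_group_add \<Rightarrow> 'v) \<Rightarrow> ('v \<Rightarrow> quat \<Rightarrow> 'v) \<Rightarrow> nat
    \<Rightarrow> ('v list \<Rightarrow> int) set"
  for lm rm n where
  zero: "(\<lambda>_. 0) \<in> trel lm rm n"
| gen: "g \<in> tgens lm rm n \<Longrightarrow> g \<in> trel lm rm n"
| diff: "f \<in> trel lm rm n \<Longrightarrow> g \<in> trel lm rm n \<Longrightarrow> (\<lambda>ys. f ys - g ys) \<in> trel lm rm n"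

text \<open>Elements of the tensor power are cosets of the relation subgroup.\<close>
definition tcls :: "(quat \<Rightarrow> 'v::ab_group_add \<Rightarrow> 'v) \<Rightarrow> ('v \<Rightarrow> quat \<Rightarrow> 'v) \<Rightarrow> nat
    \<Rightarrow> ('v list \<Rightarrow> int) \<Rightarrow> ('v list \<Rightarrow> int) set" where
  "tcls lm rm n f = {g. (\<lambda>ys. g ys - f ys) \<in> trel lm rm n}"

definition tpow :: "(quat \<Rightarrow> 'v::ab_group_add \<Rightarrow> 'v) \<Rightarrow> ('v \<Rightarrow> quat \<Rightarrow> 'v) \<Rightarrow> nat
    \<Rightarrow> ('v list \<Rightarrow> int) set set" where
  "tpow lm rm n = tcls lm rm n ` fsums n"

definition tens :: "(quat \<Rightarrow> 'v::ab_group_add \<Rightarrow> 'v) \<Rightarrow> ('v \<Rightarrow> quat \<Rightarrow> 'v) \<Rightarrow> nat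
    \<Rightarrow> 'v list \<Rightarrow> ('v list \<Rightarrow> int) set" where
  "tens lm rm n us = tcls lm rm n (pt us)"

definition tadd :: "('v list \<Rightarrow> int) set \<Rightarrow> ('v list \<Rightarrow> int) set \<Rightarrow> ('v list \<Rightarrow> int) set" where
  "tadd X Y = {(\<lambda>ys. f ys + g ys) | f g. f \<in> X \<and> g \<in> Y}"

definition tzero :: "(quat \<Rightarrow> 'v::ab_group_add \<Rightarrow> 'v) \<Rightarrow> ('v \<Rightarrow> quat \<Rightarrow> 'v) \<Rightarrow> nat
    \<Rightarrow> ('v list \<Rightarrow> int) set" where
  "tzero lm rm n = tcls lm rm n (\<lambda>_. 0)"

fun lhd :: "(quat \<Rightarrow> 'v \<Rightarrow> 'v) \<Rightarrow> quat \<Rightarrow> 'v list \<Rightarrow> 'v list" where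
  "lhd lm a [] = []"
| "lhd lm a (x # xs) = lm a x # xs"

definition rlst :: "('v \<Rightarrow> quat \<Rightarrow> 'v) \<Rightarrow> quat \<Rightarrow> 'v list \<Rightarrow> 'v list" where
  "rlst rm a xs = (if xs = [] then [] else butlast xs @ [rm (last xs) a])"

definition fpush :: "('v list \<Rightarrow> 'v list) \<Rightarrow> ('v list \<Rightarrow> int) \<Rightarrow> ('v list \<Rightarrow> int)" where
  "fpush h f = (\<lambda>ys. \<Sum>xs\<in>{xs. f xs \<noteq> 0 \<and> h xs = ys}. f xs)"

definition tlm :: "(quat \<Rightarrow> 'v::ab_group_add \<Rightarrow> 'v) \<Rightarrow> ('v \<Rightarrow> quat \<Rightarrow> 'v) \<Rightarrow> nat
    \<Rightarrow> quat \<Rightarrow> ('v list \<Rightarrow> int) set \<Rightarrow> ('v list \<Rightarrow> int) set" where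
  "tlm lm rm n a X = (\<Union>f\<in>X. tcls lm rm n (fpush (lhd lm a) f))"

definition trm :: "(quat \<Rightarrow> 'v::ab_group_add \<Rightarrow> 'v) \<Rightarrow> ('v \<Rightarrow> quat \<Rightarrow> 'v) \<Rightarrow> nat
    \<Rightarrow> ('v list \<Rightarrow> int) set \<Rightarrow> quat \<Rightarrow> ('v list \<Rightarrow> int) set" where
  "trm lm rm n X a = (\<Union>f\<in>X. tcls lm rm n (fpush (rlst rm a) f))"

fun iter_ip :: "(quat \<Rightarrow> 'v \<Rightarrow> 'v) \<Rightarrow> ('v \<Rightarrow> 'v \<Rightarrow> quat) \<Rightarrow> quat \<Rightarrow> ('v \<times> 'v) list \<Rightarrow> quat" where
  "iter_ip lm ip q [] = q"
| "iter_ip lm ip q ((u, v) # rest) = iter_ip lm ip (ip (lm q u) v) rest"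

definition tformula :: "(quat \<Rightarrow> 'v \<Rightarrow> 'v) \<Rightarrow> ('v \<Rightarrow> 'v \<Rightarrow> quat) \<Rightarrow> 'v list \<Rightarrow> 'v list \<Rightarrow> quat" where
  "tformula lm ip us vs = iter_ip lm ip (ip (hd us) (hd vs)) (zip (tl us) (tl vs))"

end

theory Submission
  imports Defs
begin


lemma quat_eqI: "qRe p = qRe q \<Longrightarrow> qI p = qI q \<Longrightarrow> qJ p = qJ q \<Longrightarrow> qK p = qK q \<Longrightarrow> p = q"
  by (cases p; cases q) auto

lemma quat_sel [simp]:
  "qRe (p + q) = qRe p + qRe q" "qI (p + q) = qI p + qI q" "qJ (p + q) = qJ p + qJ q" "qK (p + q) = qK p + qK q"
  "qRe (p - q) = qRe p - qRe q" "qI (p - q) = qI p - qI q" "qJ (p - q) = qJ p - qJ q" "qK (p - q) = qK p - qK q"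
  "qRe (- p) = - qRe p" "qI (- p) = - qI p" "qJ (- p) = - qJ p" "qK (- p) = - qK p"
  "qRe 0 = 0" "qI 0 = 0" "qJ 0 = 0" "qK 0 = 0"
  "qRe 1 = 1" "qI 1 = 0" "qJ 1 = 0" "qK 1 = 0"
  by (simp_all add: plus_quat_def minus_quat_def uminus_quat_def zero_quat_def one_quat_def)

lemma quat_mult_sel [simp]:
  "qRe (p * q) = qRe p * qRe q - qI p * qI q - qJ p * qJ q - qK p * qK q"
  "qI (p * q) = qRe p * qI q + qI p * qRe q + qJ p * qK q - qK p * qJ q"
  "qJ (p * q) = qRe p * qJ q - qI p * qK q + qJ p * qRe q + qK p * qI q"
  "qK (p * q) = qRe p * qK q + qI p * qJ q - qJ p * qI q + qK p * qRe q"
  by (simp_all add: times_quat_def)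

lemma quat_of_nat: "of_nat n = Quat (real n) 0 0 0"
  by (induction n) (auto intro: quat_eqI)

lemma quat_of_int_sel [simp]: "qRe (of_int k) = of_int k" "qI (of_int k) = 0" "qJ (of_int k) = 0" "qK (of_int k) = 0"
proof -
  have "of_int k = Quat (of_int k) 0 0 0"
  proof (cases k rule: int_cases)
    case (nonneg n) then show ?thesis by (simp add: quat_of_nat)
  next
    case (neg n) then show ?thesis by (auto intro!: quat_eqI simp: quat_of_nat of_nat_add)
  qed
  then show "qRe (of_int k) = of_int k" "qI (of_int k) = 0" "qJ (of_int k) = 0" "qK (of_int k) = 0"
    by (metis quat.sel)+
qed

lemma qcnj_sel [simp]: "qRe (qcnj q) = qRe q" "qI (qcnj q) = - qI q" "qJ (qcnj q) = - qJ q" "qK (qcnj q) = - qK q"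
  by (simp_all add: qcnj_def)

lemma qcnj_simps [simp]:
  "qcnj (p + q) = qcnj p + qcnj q" "qcnj (p - q) = qcnj p - qcnj q" "qcnj (- p) = - qcnj p"
  "qcnj (p * q) = qcnj q * qcnj p" "qcnj (qcnj p) = p" "qcnj 0 = 0" "qcnj 1 = 1"
  "qcnj (of_int k) = of_int k"
  by (auto intro!: quat_eqI simp: algebra_simps)

lemma qcnj_sum: "qcnj (sum f A) = (\<Sum>x\<in>A. qcnj (f x))"
  by (induction A rule: infinite_finite_induct) auto

lemma qRe_sum: "qRe (sum f A) = (\<Sum>x\<in>A. qRe (f x))"
  by (induction A rule: infinite_finite_induct) auto
lemma qI_sum: "qI (sum f A) = (\<Sum>x\<in>A. qI (f x))"
  by (induction A rule: infinite_finite_induct) auto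
lemma qJ_sum: "qJ (sum f A) = (\<Sum>x\<in>A. qJ (f x))"
  by (induction A rule: infinite_finite_induct) auto
lemma qK_sum: "qK (sum f A) = (\<Sum>x\<in>A. qK (f x))"
  by (induction A rule: infinite_finite_induct) auto

lemma qnonneg_sum: "(\<And>x. x \<in> A \<Longrightarrow> qnonneg (f x)) \<Longrightarrow> qnonneg (sum f A)"
  unfolding qnonneg_def by (simp add: qRe_sum qI_sum qJ_sum qK_sum sum_nonneg)

lemma qnonneg_sum_zero: "finite A \<Longrightarrow> (\<And>x. x \<in> A \<Longrightarrow> qnonneg (f x)) \<Longrightarrow> sum f A = 0 \<Longrightarrow> x \<in> A \<Longrightarrow> f x = 0"
proof -
  assume fin: "finite A" and nn: "\<And>x. x \<in> A \<Longrightarrow> qnonneg (f x)" and s: "sum f A = 0" and x: "x \<in> A"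
  have "(\<Sum>x\<in>A. qRe (f x)) = 0" using s by (metis qRe_sum quat_sel(13))
  then have "qRe (f x) = 0" using sum_nonneg_eq_0_iff[OF fin, of "\<lambda>x. qRe (f x)"] nn x
    unfolding qnonneg_def by auto
  then show "f x = 0" using nn[OF x] unfolding qnonneg_def by (auto intro: quat_eqI)
qed

lemma qnonneg_cnj_mult: "qnonneg (qcnj q * q)"
  unfolding qnonneg_def by (simp add: algebra_simps)



lemma of_int_mult_left_commute: "(of_int k :: 'b::ring_1) * (c * x) = c * (of_int k * x)"
  by (simp only: mult.assoc[symmetric] mult_of_int_commute[of k c])

definition supp :: "('a \<Rightarrow> int) \<Rightarrow> 'a set" where "supp f = {x. f x \<noteq> 0}"

definition lin :: "('a \<Rightarrow> quat) \<Rightarrow> ('a \<Rightarrow> int) \<Rightarrow> quat" where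
  "lin L f = (\<Sum>x\<in>supp f. of_int (f x) * L x)"

lemma lin_eq: "finite S \<Longrightarrow> supp f \<subseteq> S \<Longrightarrow> lin L f = (\<Sum>x\<in>S. of_int (f x) * L x)"
  unfolding lin_def by (rule sum.mono_neutral_left) (auto simp: supp_def)

lemma supp_diff: "supp (\<lambda>x. f x - g x) \<subseteq> supp f \<union> supp g" by (auto simp: supp_def)
lemma supp_add: "supp (\<lambda>x. f x + g x) \<subseteq> supp f \<union> supp g" by (auto simp: supp_def)
lemma supp_smul: "supp (\<lambda>x. k * f x) \<subseteq> supp f" by (auto simp: supp_def)
lemma supp_sum: "supp (\<lambda>x. \<Sum>j\<in>J. F j x) \<subseteq> (\<Union>j\<in>J. supp (F j))"
  by (auto simp: supp_def intro: ccontr dest: sum.neutral)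

lemma finite_supp_diff: "finite (supp f) \<Longrightarrow> finite (supp g) \<Longrightarrow> finite (supp (\<lambda>x. f x - g x))"
  by (rule finite_subset[OF supp_diff]) simp
lemma finite_supp_add: "finite (supp f) \<Longrightarrow> finite (supp g) \<Longrightarrow> finite (supp (\<lambda>x. f x + g x))"
  by (rule finite_subset[OF supp_add]) simp
lemma finite_supp_smul: "finite (supp f) \<Longrightarrow> finite (supp (\<lambda>x. k * f x))"
  by (rule finite_subset[OF supp_smul])
lemma finite_supp_sum: "finite J \<Longrightarrow> (\<And>j. j \<in> J \<Longrightarrow> finite (supp (F j))) \<Longrightarrow> finite (supp (\<lambda>x. \<Sum>j\<in>J. F j x))"
  by (rule finite_subset[OF supp_sum]) simp

lemma lin_diff: "finite (supp f) \<Longrightarrow> finite (supp g) \<Longrightarrow> lin L (\<lambda>x. f x - g x) = lin L f - lin L g"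
  apply (subst (1 2 3) lin_eq[where S = "supp f \<union> supp g"])
  using supp_diff[of f g] by (auto simp: algebra_simps sum_subtractf)

lemma lin_add: "finite (supp f) \<Longrightarrow> finite (supp g) \<Longrightarrow> lin L (\<lambda>x. f x + g x) = lin L f + lin L g"
  apply (subst (1 2 3) lin_eq[where S = "supp f \<union> supp g"])
  using supp_add[of f g] by (auto simp: algebra_simps sum.distrib)

lemma lin_zero [simp]: "lin L (\<lambda>_. 0) = 0" by (simp add: lin_def supp_def)

lemma lin_smul: "lin L (\<lambda>x. k * f x) = of_int k * lin L f"
proof (cases "finite (supp f)")
  case True
  show ?thesis apply (subst (1 2) lin_eq[where S = "supp f"])
    using True supp_smul[of k f] by (auto simp: sum_distrib_left mult.assoc)
next
  case False
  show ?thesis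
  proof (cases "k = 0")
    case True then show ?thesis by simp
  next
    case False
    then have "supp (\<lambda>x. k * f x) = supp f" by (auto simp: supp_def)
    then show ?thesis using \<open>infinite (supp f)\<close> by (simp add: lin_def)
  qed
qed

lemma lin_sum: "finite J \<Longrightarrow> (\<And>j. j \<in> J \<Longrightarrow> finite (supp (F j))) \<Longrightarrow>
   lin L (\<lambda>x. \<Sum>j\<in>J. F j x) = (\<Sum>j\<in>J. lin L (F j))"
proof (induction J rule: finite_induct)
  case empty then show ?case by simp
next
  case (insert a J)
  have "lin L (\<lambda>x. \<Sum>j\<in>insert a J. F j x) = lin L (\<lambda>x. F a x + (\<Sum>j\<in>J. F j x))"
    using insert by simp
  also have "\<dots> = lin L (F a) + lin L (\<lambda>x. \<Sum>j\<in>J. F j x)"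
    by (rule lin_add) (use insert finite_supp_sum in auto)
  finally show ?case using insert by simp
qed

definition pt1 :: "'a \<Rightarrow> 'a \<Rightarrow> int" where "pt1 a = (\<lambda>y. if y = a then 1 else 0)"

lemma supp_pt1: "supp (pt1 a) = {a}" by (auto simp: supp_def pt1_def)

lemma lin_pt1: "lin L (pt1 a) = L a" unfolding lin_def supp_pt1 by (simp add: pt1_def)

lemma lin_cong: "(\<And>x. x \<in> supp f \<Longrightarrow> L x = L' x) \<Longrightarrow> lin L f = lin L' f"
  unfolding lin_def by (rule sum.cong) auto

lemma lin_Ladd: "lin (\<lambda>x. L x + L' x) f = lin L f + lin L' f"
  unfolding lin_def by (simp add: algebra_simps sum.distrib)
lemma lin_Ldiff: "lin (\<lambda>x. L x - L' x) f = lin L f - lin L' f"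
  unfolding lin_def by (simp add: algebra_simps sum_subtractf)
lemma lin_Lsum: "lin (\<lambda>x. \<Sum>k\<in>K. L k x) f = (\<Sum>k\<in>K. lin (L k) f)"
  unfolding lin_def sum_distrib_left by (rule sum.swap)
lemma lin_Lzero [simp]: "lin (\<lambda>x. 0) f = 0"
  unfolding lin_def by simp
lemma lin_Lmult_left: "lin (\<lambda>x. c * L x) f = c * lin L f"
  unfolding lin_def sum_distrib_left by (rule sum.cong) (simp_all only: of_int_mult_left_commute)
lemma lin_Lmult_right: "lin (\<lambda>x. L x * c) f = lin L f * c"
  unfolding lin_def by (simp add: sum_distrib_right mult.assoc)
lemma lin_cnj: "qcnj (lin L f) = lin (\<lambda>x. qcnj (L x)) f"
  unfolding lin_def qcnj_sum by (rule sum.cong) (simp_all add: mult_of_int_commute[of "f _" "qcnj _"])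

lemma lin_swap: "lin (\<lambda>x. lin (\<lambda>y. K x y) g) f = lin (\<lambda>y. lin (\<lambda>x. K x y) f) g"
  unfolding lin_def sum_distrib_left
  apply (subst sum.swap)
  apply (rule sum.cong, simp)+
  by (rule of_int_mult_left_commute)

lemma fpush_eq: "finite S \<Longrightarrow> supp f \<subseteq> S \<Longrightarrow> fpush h f = (\<lambda>y. \<Sum>x\<in>S. f x * pt1 (h x) y)"
proof
  fix y assume S: "finite S" "supp f \<subseteq> S"
  have "fpush h f y = (\<Sum>x\<in>{x\<in>S. h x = y}. f x)"
    unfolding fpush_def
    by (rule sum.mono_neutral_left) (use S in \<open>auto simp: supp_def\<close>)
  also have "\<dots> = (\<Sum>x\<in>S. f x * pt1 (h x) y)"
    using S(1) by (simp add: sum.inter_filter pt1_def) (rule sum.cong, auto)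
  finally show "fpush h f y = (\<Sum>x\<in>S. f x * pt1 (h x) y)" .
qed

lemma supp_fpush: "supp (fpush h f) \<subseteq> h ` supp f"
proof
  fix y assume "y \<in> supp (fpush h f)"
  then have "fpush h f y \<noteq> 0" by (simp add: supp_def)
  then have "{x. f x \<noteq> 0 \<and> h x = y} \<noteq> {}" unfolding fpush_def by (cases "{x. f x \<noteq> 0 \<and> h x = y} = {}") auto
  then show "y \<in> h ` supp f" by (auto simp: supp_def)
qed

lemma finite_supp_fpush: "finite (supp f) \<Longrightarrow> finite (supp (fpush h f))"
  using supp_fpush finite_subset by blast

lemma fpush_diff: "finite (supp f) \<Longrightarrow> finite (supp g) \<Longrightarrow>
  fpush h (\<lambda>x. f x - g x) = (\<lambda>y. fpush h f y - fpush h g y)"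
  apply (subst (1 2 3) fpush_eq[where S = "supp f \<union> supp g"])
  using supp_diff[of f g] by (auto simp: algebra_simps sum_subtractf)

lemma fpush_pt1: "fpush h (pt1 a) = pt1 (h a)"
  apply (subst fpush_eq[where S="{a}"]) apply (simp_all add: supp_pt1) apply (simp add: pt1_def)
  done

lemma fpush_zero: "fpush h (\<lambda>_. 0) = (\<lambda>_. 0)"
  by (simp add: fpush_def)

lemma lin_fpush: "finite (supp f) \<Longrightarrow> lin L (fpush h f) = lin (\<lambda>x. L (h x)) f"
proof -
  assume fin: "finite (supp f)"
  let ?S = "supp f"
  have "lin L (fpush h f) = (\<Sum>y\<in>h ` ?S. of_int (fpush h f y) * L y)"
    by (rule lin_eq) (use fin supp_fpush in auto)
  also have "\<dots> = (\<Sum>y\<in>h ` ?S. (\<Sum>x\<in>{x\<in>?S. h x = y}. of_int (f x) * L (h x)))"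
  proof (rule sum.cong, simp)
    fix y assume "y \<in> h ` ?S"
    have "fpush h f y = (\<Sum>x\<in>{x\<in>?S. h x = y}. f x)"
      unfolding fpush_def supp_def by (rule sum.cong) auto
    then show "of_int (fpush h f y) * L y = (\<Sum>x\<in>{x\<in>?S. h x = y}. of_int (f x) * L (h x))"
      by (simp add: sum_distrib_right)
  qed
  also have "\<dots> = (\<Sum>x\<in>?S. of_int (f x) * L (h x))"
    by (rule sum.image_gen[OF fin, symmetric])
  also have "\<dots> = lin (\<lambda>x. L (h x)) f" by (simp add: lin_def)
  finally show ?thesis .
qed



lemma pt_eq: "pt = pt1" by (auto simp: pt_def pt1_def fun_eq_iff)

lemma fsums_iff: "f \<in> fsums n \<longleftrightarrow> finite (supp f) \<and> (\<forall>xs\<in>supp f. length xs = n)"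
  by (auto simp: fsums_def supp_def)

locale qhs =
  fixes lm :: "quat \<Rightarrow> 'v::ab_group_add \<Rightarrow> 'v" and rm :: "'v \<Rightarrow> quat \<Rightarrow> 'v" and ip :: "'v \<Rightarrow> 'v \<Rightarrow> quat"
  assumes hs: "two_sided_qhs lm rm ip"
    and adj: "\<forall>u v a. ip u (lm a v) = ip (lm (qcnj a) u) v"
begin

lemma bim: "bimodule lm rm" and qip: "is_qip UNIV (+) 0 rm ip"
  using hs by (auto simp: two_sided_qhs_def)

lemma lm_mult: "lm (a * b) u = lm a (lm b u)" using bim unfolding bimodule_def by simp
lemma lm_one [simp]: "lm 1 u = u" using bim unfolding bimodule_def by blast
lemma lm_addq: "lm (a + b) u = lm a u + lm b u" using bim unfolding bimodule_def by blast
lemma lm_add: "lm a (u + v) = lm a u + lm a v" using bim unfolding bimodule_def by blast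
lemma rm_mult: "rm u (a * b) = rm (rm u a) b" using bim unfolding bimodule_def by blast
lemma rm_one [simp]: "rm u 1 = u" using bim unfolding bimodule_def by blast
lemma rm_addq: "rm u (a + b) = rm u a + rm u b" using bim unfolding bimodule_def by blast
lemma rm_add: "rm (u + v) a = rm u a + rm v a" using bim unfolding bimodule_def by blast
lemma lm_rm: "rm (lm a u) b = lm a (rm u b)" using bim unfolding bimodule_def by blast

lemma ip_addl: "ip (u + v) w = ip u w + ip v w" using qip unfolding is_qip_def by blast
lemma ip_addr: "ip u (v + w) = ip u v + ip u w" using qip unfolding is_qip_def by blast
lemma ip_rm: "ip (rm u a) (rm v b) = qcnj b * ip u v * a" using qip unfolding is_qip_def by blast
lemma ip_sym: "ip v u = qcnj (ip u v)" using qip unfolding is_qip_def by blast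
lemma ip_nonneg: "qnonneg (ip u u)" using qip unfolding is_qip_def by blast
lemma ip_def0: "ip u u = 0 \<Longrightarrow> u = 0" using qip unfolding is_qip_def by blast

lemma ip_rml: "ip (rm u a) v = ip u v * a"
  using ip_rm[of u a v 1] by simp
lemma ip_rmr: "ip u (rm v b) = qcnj b * ip u v"
  using ip_rm[of u 1 v b] by simp
lemma adj': "ip (lm a u) v = ip u (lm (qcnj a) v)"
  using adj by simp

lemma lm_zeroq [simp]: "lm 0 u = 0"
  using lm_addq[of 0 0 u] by simp
lemma lm_zero [simp]: "lm a 0 = 0"
  using lm_add[of a 0 0] by simp
lemma ip_zerol [simp]: "ip 0 v = 0"
  using ip_addl[of 0 0 v] by simp

lemma iter_add: "iter_ip lm ip (p + q) ps = iter_ip lm ip p ps + iter_ip lm ip q ps"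
  by (induction ps arbitrary: p q) (auto simp: lm_addq ip_addl)

lemma iter_zero [simp]: "iter_ip lm ip 0 ps = 0"
  using iter_add[of 0 0 ps] by simp

lemma iter_cnj: "iter_ip lm ip (qcnj q) (map (\<lambda>(x, y). (y, x)) ps) = qcnj (iter_ip lm ip q ps)"
proof (induction ps arbitrary: q)
  case Nil then show ?case by simp
next
  case (Cons p ps)
  obtain u v where p: "p = (u, v)" by (cases p)
  have "ip (lm (qcnj q) v) u = qcnj (ip (lm q u) v)"
    by (metis adj ip_sym)
  then show ?case using Cons p by simp
qed

definition G :: "quat \<Rightarrow> 'v list \<Rightarrow> 'v list \<Rightarrow> quat" where
  "G q xs ys = iter_ip lm ip q (zip xs ys)"

lemma G_Cons [simp]: "G q (x # xs) (y # ys) = G (ip (lm q x) y) xs ys"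
  by (simp add: G_def)
lemma G_Nil [simp]: "G q [] ys = q" "G q xs [] = q"
  by (simp_all add: G_def)
lemma G_add: "G (p + q) xs ys = G p xs ys + G q xs ys"
  by (simp add: G_def iter_add)
lemma G_zero [simp]: "G 0 xs ys = 0"
  by (simp add: G_def)
lemma G_sym: "G (qcnj q) ys xs = qcnj (G q xs ys)"
  unfolding G_def by (subst zip_commute) (rule iter_cnj)

lemma G_add_slot: "length ys = length as + Suc (length bs) \<Longrightarrow>
  G q (as @ (x + y) # bs) ys = G q (as @ x # bs) ys + G q (as @ y # bs) ys"
proof (induction as arbitrary: q ys)
  case Nil
  then obtain y0 ys' where ys: "ys = y0 # ys'" by (cases ys) auto
  show ?case by (simp add: ys lm_add ip_addl G_add)
next
  case (Cons a as)
  then obtain y0 ys' where ys: "ys = y0 # ys'" by (cases ys) auto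
  show ?case using Cons ys by simp
qed

lemma G_rm_slot: "length ys = length as + Suc (Suc (length bs)) \<Longrightarrow>
  G q (as @ rm x a # y # bs) ys = G q (as @ x # lm a y # bs) ys"
proof (induction as arbitrary: q ys)
  case Nil
  then obtain y0 y1 ys' where ys: "ys = y0 # y1 # ys'" by (cases ys; cases "tl ys") auto
  have "lm q (rm x a) = rm (lm q x) a" by (simp add: lm_rm)
  then show ?case by (simp add: ys ip_rml lm_mult)
next
  case (Cons c as)
  then obtain y0 ys' where ys: "ys = y0 # ys'" by (cases ys) auto
  show ?case using Cons ys by simp
qed

lemma rlst_Cons: "xs \<noteq> [] \<Longrightarrow> rlst rm a (x # xs) = x # rlst rm a xs"
  by (simp add: rlst_def)
lemma rlst_single: "rlst rm a [x] = [rm x a]"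
  by (simp add: rlst_def)
lemma length_rlst [simp]: "length (rlst rm a xs) = length xs"
  by (simp add: rlst_def)
lemma length_lhd [simp]: "length (lhd lm a xs) = length xs"
  by (cases xs) auto

lemma G_rlst: "length xs = length ys \<Longrightarrow> xs \<noteq> [] \<Longrightarrow>
  G q (rlst rm a xs) (rlst rm b ys) = qcnj b * G q xs ys * a"
proof (induction xs arbitrary: q ys)
  case Nil then show ?case by simp
next
  case (Cons x xs)
  then obtain y ys' where ys: "ys = y # ys'" by (cases ys) auto
  show ?case
  proof (cases "xs = []")
    case True
    then have "ys' = []" using Cons ys by simp
    then show ?thesis using True ys by (simp add: rlst_single lm_rm[symmetric] ip_rm)
  next
    case False
    then have "ys' \<noteq> []" using Cons ys by auto
    then show ?thesis using False ys Cons by (simp add: rlst_Cons)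
  qed
qed

lemma G_lhd: "G 1 xs (lhd lm a ys) = G 1 (lhd lm (qcnj a) xs) ys"
  by (cases xs; cases ys) (auto simp: adj)

lemma tformula_G: "xs \<noteq> [] \<Longrightarrow> ys \<noteq> [] \<Longrightarrow> tformula lm ip xs ys = G 1 xs ys"
  by (cases xs; cases ys) (auto simp: tformula_def G_def)

end


context qhs begin

abbreviation R where "R n \<equiv> trel lm rm n"

lemma tgens_fsums: "g \<in> tgens lm rm n \<Longrightarrow> g \<in> fsums n"
  unfolding tgens_def fsums_def pt_def
  by (auto intro: finite_subset[of _ "{_, _, _}"] finite_subset[of _ "{_, _}"] split: if_splits)

lemma trel_fsums: "f \<in> R n \<Longrightarrow> f \<in> fsums n"
proof (induction rule: trel.induct)
  case zero then show ?case by (simp add: fsums_def)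
next
  case (gen g) then show ?case by (rule tgens_fsums)
next
  case (diff f g) then show ?case
    unfolding fsums_iff using supp_diff[of f g] finite_supp_diff by blast
qed

lemma trel_finite: "f \<in> R n \<Longrightarrow> finite (supp f)"
  using trel_fsums fsums_iff by blast

lemma trel_neg: "f \<in> R n \<Longrightarrow> (\<lambda>x. - f x) \<in> R n"
  using trel.diff[OF trel.zero, where g=f] by simp

lemma trel_add: "f \<in> R n \<Longrightarrow> g \<in> R n \<Longrightarrow> (\<lambda>x. f x + g x) \<in> R n"
  using trel.diff[where f=f and g="\<lambda>x. - g x"] trel_neg by simp

lemma trel_diff: "f \<in> R n \<Longrightarrow> g \<in> R n \<Longrightarrow> (\<lambda>x. f x - g x) \<in> R n"
  by (rule trel.diff)

lemma trel_smul: "f \<in> R n \<Longrightarrow> (\<lambda>x. k * f x) \<in> R n"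
proof (induction k rule: int_induct[where k = 0])
  case base then show ?case using trel.zero by simp
next
  case (step1 i)
  then show ?case using trel_add[of "\<lambda>x. i * f x" n f] by (simp add: algebra_simps)
next
  case (step2 i)
  then show ?case using trel_diff[of "\<lambda>x. i * f x" n f] by (simp add: algebra_simps)
qed

lemma trel_sum: "finite J \<Longrightarrow> (\<And>j. j \<in> J \<Longrightarrow> F j \<in> R n) \<Longrightarrow> (\<lambda>x. \<Sum>j\<in>J. F j x) \<in> R n"
proof (induction J rule: finite_induct)
  case empty then show ?case using trel.zero by simp
next
  case (insert a J) then show ?case using trel_add[of "F a" n "\<lambda>x. \<Sum>j\<in>J. F j x"] by simp
qed

lemma tcls_eq: "(\<lambda>x. f x - g x) \<in> R n \<Longrightarrow> tcls lm rm n f = tcls lm rm n g"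
proof -
  assume fg: "(\<lambda>x. f x - g x) \<in> R n"
  have "h \<in> tcls lm rm n f \<longleftrightarrow> h \<in> tcls lm rm n g" for h
  proof
    assume "h \<in> tcls lm rm n f"
    then have "(\<lambda>x. h x - f x) \<in> R n" by (simp add: tcls_def)
    from trel_add[OF this fg] show "h \<in> tcls lm rm n g" by (simp add: tcls_def)
  next
    assume "h \<in> tcls lm rm n g"
    then have "(\<lambda>x. h x - g x) \<in> R n" by (simp add: tcls_def)
    from trel_diff[OF this fg] show "h \<in> tcls lm rm n f" by (simp add: tcls_def)
  qed
  then show ?thesis by blast
qed

lemma tcls_self: "f \<in> tcls lm rm n f"
  using trel.zero by (simp add: tcls_def)

lemma tcls_mem: "g \<in> tcls lm rm n f \<Longrightarrow> (\<lambda>x. g x - f x) \<in> R n"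
  by (simp add: tcls_def)

lemma tcls_mem_fsums: "f \<in> fsums n \<Longrightarrow> g \<in> tcls lm rm n f \<Longrightarrow> g \<in> fsums n"
proof -
  assume f: "f \<in> fsums n" and g: "g \<in> tcls lm rm n f"
  then have d: "(\<lambda>x. g x - f x) \<in> fsums n" using tcls_mem trel_fsums by blast
  have "g = (\<lambda>x. (g x - f x) + f x)" by simp
  moreover have "supp (\<lambda>x. (g x - f x) + f x) \<subseteq> supp (\<lambda>x. g x - f x) \<union> supp f"
    by (rule supp_add)
  ultimately show ?thesis using d f unfolding fsums_iff
    by (metis (no_types, lifting) Un_iff finite_Un finite_subset subset_iff)
qed

definition Phi :: "quat \<Rightarrow> ('v list \<Rightarrow> int) \<Rightarrow> ('v list \<Rightarrow> int) \<Rightarrow> quat" where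
  "Phi q f g = lin (\<lambda>xs. lin (\<lambda>ys. G q xs ys) g) f"

lemma Phi_diffl: "finite (supp f) \<Longrightarrow> finite (supp f') \<Longrightarrow> Phi q (\<lambda>x. f x - f' x) g = Phi q f g - Phi q f' g"
  unfolding Phi_def by (rule lin_diff)
lemma Phi_addl: "finite (supp f) \<Longrightarrow> finite (supp f') \<Longrightarrow> Phi q (\<lambda>x. f x + f' x) g = Phi q f g + Phi q f' g"
  unfolding Phi_def by (rule lin_add)
lemma Phi_diffr: "finite (supp g) \<Longrightarrow> finite (supp g') \<Longrightarrow> Phi q f (\<lambda>x. g x - g' x) = Phi q f g - Phi q f g'"
  unfolding Phi_def by (simp add: lin_diff lin_Ldiff)
lemma Phi_addr: "finite (supp g) \<Longrightarrow> finite (supp g') \<Longrightarrow> Phi q f (\<lambda>x. g x + g' x) = Phi q f g + Phi q f g'"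
  unfolding Phi_def by (simp add: lin_add lin_Ladd)
lemma Phi_suml: "finite J \<Longrightarrow> (\<And>j. j \<in> J \<Longrightarrow> finite (supp (F j))) \<Longrightarrow>
   Phi q (\<lambda>x. \<Sum>j\<in>J. F j x) g = (\<Sum>j\<in>J. Phi q (F j) g)"
  unfolding Phi_def by (rule lin_sum)
lemma Phi_sumr: "finite J \<Longrightarrow> (\<And>j. j \<in> J \<Longrightarrow> finite (supp (F j))) \<Longrightarrow>
   Phi q f (\<lambda>x. \<Sum>j\<in>J. F j x) = (\<Sum>j\<in>J. Phi q f (F j))"
  unfolding Phi_def by (simp add: lin_sum lin_Lsum)
lemma Phi_zerol [simp]: "Phi q (\<lambda>_. 0) g = 0"
  unfolding Phi_def by simp
lemma Phi_zeror [simp]: "Phi q f (\<lambda>_. 0) = 0"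
  unfolding Phi_def by simp
lemma Phi_zeroq [simp]: "Phi 0 f g = 0"
proof -
  have "G 0 xs = (\<lambda>_. 0)" for xs by (simp add: fun_eq_iff)
  then show ?thesis unfolding Phi_def by simp
qed

lemma Phi_sym: "Phi (qcnj q) g f = qcnj (Phi q f g)"
  unfolding Phi_def lin_cnj
  by (subst lin_swap) (simp add: G_sym)

lemma Phi_pt: "Phi q (pt xs) (pt ys) = G q xs ys"
  unfolding Phi_def pt_eq by (simp add: lin_pt1)

lemma Phi_fpush: "finite (supp f) \<Longrightarrow> finite (supp g) \<Longrightarrow>
  Phi q (fpush h f) (fpush k g) = lin (\<lambda>xs. lin (\<lambda>ys. G q (h xs) (k ys)) g) f"
  unfolding Phi_def by (simp add: lin_fpush)

lemma Phi_gen_zero: "f \<in> tgens lm rm n \<Longrightarrow> g \<in> fsums n \<Longrightarrow> Phi q f g = 0"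
proof -
  assume f: "f \<in> tgens lm rm n" and g: "g \<in> fsums n"
  have len: "ys \<in> supp g \<Longrightarrow> length ys = n" for ys using g fsums_iff by blast
  have fin: "finite (supp (pt xs))" for xs :: "'v list" by (simp add: pt_eq supp_pt1)
  have fin2: "finite (supp (\<lambda>ys. pt A ys - pt B ys))" for A B :: "'v list"
    using fin finite_supp_diff by blast
  let ?L = "\<lambda>xs. lin (\<lambda>ys. G q xs ys) g"
  have Phi_pt1: "Phi q (pt A) g = ?L A" for A
    unfolding Phi_def pt_eq by (simp add: lin_pt1)
  from f show ?thesis
    unfolding tgens_def
  proof (elim UnE CollectE exE conjE)
    fix as bs x y assume f: "f = (\<lambda>ys. pt (as @ [x + y] @ bs) ys - pt (as @ [x] @ bs) ys - pt (as @ [y] @ bs) ys)"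
      and l: "length as + length bs + 1 = n"
    have "Phi q f g = ?L (as @ [x + y] @ bs) - ?L (as @ [x] @ bs) - ?L (as @ [y] @ bs)"
      unfolding f
      using Phi_diffl[of "\<lambda>ys. pt (as @ [x + y] @ bs) ys - pt (as @ [x] @ bs) ys" "pt (as @ [y] @ bs)" q g]
        Phi_diffl[of "pt (as @ [x + y] @ bs)" "pt (as @ [x] @ bs)" q g] fin fin2
      by (simp add: Phi_pt1)
    also have "\<dots> = lin (\<lambda>ys. G q (as @ [x + y] @ bs) ys - G q (as @ [x] @ bs) ys - G q (as @ [y] @ bs) ys) g"
      by (simp add: lin_Ldiff)
    also have "\<dots> = lin (\<lambda>ys. 0) g"
      by (rule lin_cong) (use len l G_add_slot in auto)
    finally show ?thesis by simp
  next
    fix as bs x y a assume f: "f = (\<lambda>ys. pt (as @ [rm x a, y] @ bs) ys - pt (as @ [x, lm a y] @ bs) ys)"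
      and l: "length as + length bs + 2 = n"
    have "Phi q f g = ?L (as @ [rm x a, y] @ bs) - ?L (as @ [x, lm a y] @ bs)"
      unfolding f using Phi_diffl[of "pt (as @ [rm x a, y] @ bs)" "pt (as @ [x, lm a y] @ bs)" q g] fin
      by (simp add: Phi_pt1)
    also have "\<dots> = lin (\<lambda>ys. G q (as @ [rm x a, y] @ bs) ys - G q (as @ [x, lm a y] @ bs) ys) g"
      by (simp add: lin_Ldiff)
    also have "\<dots> = lin (\<lambda>ys. 0) g"
      by (rule lin_cong) (use len l G_rm_slot in auto)
    finally show ?thesis by simp
  qed
qed

lemma Phi_trel_left: "f \<in> R n \<Longrightarrow> g \<in> fsums n \<Longrightarrow> Phi q f g = 0"
proof (induction rule: trel.induct)
  case zero then show ?case by simp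
next
  case (gen g') then show ?case using Phi_gen_zero by blast
next
  case (diff f1 f2) then show ?case by (simp add: Phi_diffl trel_finite)
qed

lemma Phi_trel_right: "g \<in> R n \<Longrightarrow> f \<in> fsums n \<Longrightarrow> Phi q f g = 0"
  using Phi_trel_left[of g n f "qcnj q"] Phi_sym[of "qcnj q" f g] by simp

lemma Phi_cong: "f \<in> fsums n \<Longrightarrow> g \<in> fsums n \<Longrightarrow> (\<lambda>x. f' x - f x) \<in> R n \<Longrightarrow> (\<lambda>x. g' x - g x) \<in> R n
  \<Longrightarrow> Phi q f' g' = Phi q f g"
proof -
  assume f: "f \<in> fsums n" and g: "g \<in> fsums n" and ff: "(\<lambda>x. f' x - f x) \<in> R n" and gg: "(\<lambda>x. g' x - g x) \<in> R n"
  have f': "f' \<in> fsums n" using tcls_mem_fsums[OF f] ff by (simp add: tcls_def)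
  have g': "g' \<in> fsums n" using tcls_mem_fsums[OF g] gg by (simp add: tcls_def)
  have ffin: "finite (supp f)" "finite (supp f')" "finite (supp g)" "finite (supp g')"
    using f f' g g' fsums_iff by blast+
  have "Phi q f' g' = Phi q f g' + Phi q (\<lambda>x. f' x - f x) g'"
    using Phi_diffl[OF ffin(2,1), of q g'] by simp
  also have "Phi q (\<lambda>x. f' x - f x) g' = 0" using Phi_trel_left[OF ff g'] .
  also have "Phi q f g' = Phi q f g + Phi q f (\<lambda>x. g' x - g x)"
    using Phi_diffr[OF ffin(4,3), of q f] by simp
  also have "Phi q f (\<lambda>x. g' x - g x) = 0" using Phi_trel_right[OF gg f] .
  finally show ?thesis by simp
qed

end


context qhs begin

lemma fin_pt [simp]: "finite (supp (pt xs))" by (simp add: pt_eq supp_pt1)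

lemma fpush_pt: "fpush h (pt xs) = pt (h xs)" by (simp add: pt_eq fpush_pt1)

lemma fpush_gen1: "fpush h (\<lambda>ys. pt A ys - pt B ys - pt C ys) = (\<lambda>ys. pt (h A) ys - pt (h B) ys - pt (h C) ys)"
  using fpush_diff[of "\<lambda>ys. pt A ys - pt B ys" "pt C" h] fpush_diff[of "pt A" "pt B" h]
  by (simp add: finite_supp_diff fpush_pt)

lemma fpush_gen2: "fpush h (\<lambda>ys. pt A ys - pt B ys) = (\<lambda>ys. pt (h A) ys - pt (h B) ys)"
  using fpush_diff[of "pt A" "pt B" h] by (simp add: fpush_pt)

lemma gen1: "length as + length bs + 1 = n \<Longrightarrow>
  (\<lambda>ys. pt (as @ [x + y] @ bs) ys - pt (as @ [x] @ bs) ys - pt (as @ [y] @ bs) ys) \<in> R n"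
  by (rule trel.gen) (unfold tgens_def, rule UnI1, blast)

lemma gen2: "length as + length bs + 2 = n \<Longrightarrow>
  (\<lambda>ys. pt (as @ [rm x a, y] @ bs) ys - pt (as @ [x, lm a y] @ bs) ys) \<in> R n"
  by (rule trel.gen) (unfold tgens_def, rule UnI2, blast)

lemma trel_fpush_gen:
  assumes "\<And>g. g \<in> tgens lm rm n \<Longrightarrow> fpush h g \<in> R m"
  shows "f \<in> R n \<Longrightarrow> fpush h f \<in> R m"
proof (induction rule: trel.induct)
  case zero then show ?case by (simp add: fpush_zero trel.zero)
next
  case (gen g) then show ?case by (rule assms)
next
  case (diff f g) then show ?case by (simp add: fpush_diff trel_finite trel.diff)
qed

lemma trel_fpush_Cons: "f \<in> R n \<Longrightarrow> fpush ((#) e) f \<in> R (Suc n)"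
proof (rule trel_fpush_gen)
  fix g assume "g \<in> tgens lm rm n"
  then show "fpush ((#) e) g \<in> R (Suc n)"
    unfolding tgens_def
  proof (elim UnE CollectE exE conjE)
    fix as bs x y assume g: "g = (\<lambda>ys. pt (as @ [x + y] @ bs) ys - pt (as @ [x] @ bs) ys - pt (as @ [y] @ bs) ys)"
      and l: "length as + length bs + 1 = n"
    show ?thesis unfolding g fpush_gen1 using gen1[of "e # as" bs "Suc n" x y] l by simp
  next
    fix as bs x y a assume g: "g = (\<lambda>ys. pt (as @ [rm x a, y] @ bs) ys - pt (as @ [x, lm a y] @ bs) ys)"
      and l: "length as + length bs + 2 = n"
    show ?thesis unfolding g fpush_gen2 using gen2[of "e # as" bs "Suc n" x a y] l by simp
  qed
qed

lemma trel_fpush_lhd: "f \<in> R n \<Longrightarrow> fpush (lhd lm c) f \<in> R n"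
proof (rule trel_fpush_gen)
  fix g assume "g \<in> tgens lm rm n"
  then show "fpush (lhd lm c) g \<in> R n"
    unfolding tgens_def
  proof (elim UnE CollectE exE conjE)
    fix as bs x y assume g: "g = (\<lambda>ys. pt (as @ [x + y] @ bs) ys - pt (as @ [x] @ bs) ys - pt (as @ [y] @ bs) ys)"
      and l: "length as + length bs + 1 = n"
    show ?thesis
    proof (cases as)
      case Nil then show ?thesis unfolding g fpush_gen1 using gen1[of "[]" bs n "lm c x" "lm c y"] l by (simp add: lm_add)
    next
      case (Cons a0 as') then show ?thesis unfolding g fpush_gen1 using gen1[of "lm c a0 # as'" bs n x y] l by simp
    qed
  next
    fix as bs x y a assume g: "g = (\<lambda>ys. pt (as @ [rm x a, y] @ bs) ys - pt (as @ [x, lm a y] @ bs) ys)"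
      and l: "length as + length bs + 2 = n"
    show ?thesis
    proof (cases as)
      case Nil then show ?thesis unfolding g fpush_gen2 using gen2[of "[]" bs n "lm c x" a y] l by (simp add: lm_rm)
    next
      case (Cons a0 as') then show ?thesis unfolding g fpush_gen2 using gen2[of "lm c a0 # as'" bs n x a y] l by simp
    qed
  qed
qed

lemma rlst_append: "bs \<noteq> [] \<Longrightarrow> rlst rm a (xs @ bs) = xs @ rlst rm a bs"
  by (simp add: rlst_def butlast_append)
lemma rlst_snoc: "rlst rm a (xs @ [z]) = xs @ [rm z a]"
  by (simp add: rlst_def)

lemma trel_fpush_rlst: "f \<in> R n \<Longrightarrow> fpush (rlst rm c) f \<in> R n"
proof (rule trel_fpush_gen)
  fix g assume "g \<in> tgens lm rm n"
  then show "fpush (rlst rm c) g \<in> R n"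
    unfolding tgens_def
  proof (elim UnE CollectE exE conjE)
    fix as bs x y assume g: "g = (\<lambda>ys. pt (as @ [x + y] @ bs) ys - pt (as @ [x] @ bs) ys - pt (as @ [y] @ bs) ys)"
      and l: "length as + length bs + 1 = n"
    show ?thesis
    proof (cases "bs = []")
      case True then show ?thesis unfolding g fpush_gen1 using gen1[of as "[]" n "rm x c" "rm y c"] l
        by (simp add: rm_add rlst_snoc[where xs=as, simplified])
    next
      case False
      then show ?thesis unfolding g fpush_gen1 using gen1[of as "rlst rm c bs" n x y] l
        using rlst_append[OF False, of c "as @ [_]"] by simp
    qed
  next
    fix as bs x y a assume g: "g = (\<lambda>ys. pt (as @ [rm x a, y] @ bs) ys - pt (as @ [x, lm a y] @ bs) ys)"
      and l: "length as + length bs + 2 = n"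
    show ?thesis
    proof (cases "bs = []")
      case True
      have "rlst rm c (as @ [rm x a, y]) = (as @ [rm x a]) @ [rm y c]"
        using rlst_snoc[of c "as @ [rm x a]" y] by simp
      moreover have "rlst rm c (as @ [x, lm a y]) = (as @ [x]) @ [lm a (rm y c)]"
        using rlst_snoc[of c "as @ [x]" "lm a y"] by (simp add: lm_rm)
      ultimately show ?thesis unfolding g fpush_gen2 using True gen2[of as "[]" n x a "rm y c"] l by simp
    next
      case False
      then show ?thesis unfolding g fpush_gen2 using gen2[of as "rlst rm c bs" n x a y] l
        using rlst_append[OF False, of c "as @ [_, _]"] by simp
    qed
  qed
qed

lemma tcls_fpush:
  assumes f: "f \<in> fsums n" and hR: "\<And>g. g \<in> R n \<Longrightarrow> fpush h g \<in> R n"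
  shows "(\<Union>f'\<in>tcls lm rm n f. tcls lm rm n (fpush h f')) = tcls lm rm n (fpush h f)"
proof -
  have "tcls lm rm n (fpush h f') = tcls lm rm n (fpush h f)" if f': "f' \<in> tcls lm rm n f" for f'
  proof (rule tcls_eq)
    have "f' \<in> fsums n" using tcls_mem_fsums[OF f f'] .
    then have "(\<lambda>x. fpush h f' x - fpush h f x) = fpush h (\<lambda>x. f' x - f x)"
      using f by (simp add: fpush_diff fsums_iff)
    then show "(\<lambda>x. fpush h f' x - fpush h f x) \<in> R n"
      using hR[OF tcls_mem[OF f']] by simp
  qed
  then show ?thesis using tcls_self[of f n] by blast
qed

end


context qhs begin

lemma ip_diffl: "ip (u - v) w = ip u w - ip v w"
  using ip_addl[of "u - v" v w] by (simp add: algebra_simps)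
lemma ip_suml: "ip (\<Sum>j\<in>J. a j) w = (\<Sum>j\<in>J. ip (a j) w)"
  by (induction J rule: infinite_finite_induct) (auto simp: ip_addl)
lemma rm_zeroq [simp]: "rm u 0 = 0"
  using rm_addq[of u 0 0] by simp

definition orthonormal :: "'v list \<Rightarrow> bool" where
  "orthonormal es \<longleftrightarrow> (\<forall>i<length es. \<forall>j<length es. ip (es!i) (es!j) = (if i = j then 1 else 0))"

lemma qnonneg_real: "qnonneg q \<Longrightarrow> q = Quat (qRe q) 0 0 0"
  unfolding qnonneg_def by (cases q) auto

lemma gram_schmidt: "\<exists>es. orthonormal es \<and> (\<forall>u\<in>set us. \<exists>c. u = (\<Sum>j<length es. rm (es!j) (c j)))"
proof (induction us)
  case Nil
  show ?case by (rule exI[of _ "[]"]) (simp add: orthonormal_def)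
next
  case (Cons u us)
  then obtain es where on: "orthonormal es" and rep: "\<forall>v\<in>set us. \<exists>c. v = (\<Sum>j<length es. rm (es!j) (c j))"
    by blast
  define m where "m = length es"
  define c where "c j = ip u (es!j)" for j
  define w where "w = u - (\<Sum>j<m. rm (es!j) (c j))"
  have wperp: "ip w (es!k) = 0" if k: "k < m" for k
  proof -
    have "ip w (es!k) = ip u (es!k) - (\<Sum>j<m. ip (es!j) (es!k) * c j)"
      by (simp add: w_def ip_diffl ip_suml ip_rml)
    also have "(\<Sum>j<m. ip (es!j) (es!k) * c j) = (\<Sum>j<m. if j = k then c j else 0)"
      by (rule sum.cong) (use on k in \<open>auto simp: orthonormal_def m_def\<close>)
    also have "\<dots> = c k" using k by simp
    finally show ?thesis by (simp add: c_def)
  qed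
  show ?case
  proof (cases "w = 0")
    case True
    then have "u = (\<Sum>j<m. rm (es!j) (c j))" by (simp add: w_def)
    then show ?thesis using on rep by (auto simp: m_def)
  next
    case False
    have nn: "qnonneg (ip w w)" by (rule ip_nonneg)
    define r where "r = qRe (ip w w)"
    have wr: "ip w w = Quat r 0 0 0" using qnonneg_real[OF nn] by (simp add: r_def)
    have "r \<noteq> 0" using False ip_def0 wr by (auto simp: zero_quat_def)
    moreover have "r \<ge> 0" using nn by (simp add: qnonneg_def r_def)
    ultimately have rpos: "r > 0" by simp
    define s where "s = 1 / sqrt r"
    define e where "e = rm w (Quat s 0 0 0)"
    have ss: "s * r * s = 1" using rpos by (simp add: s_def)
    have ee: "ip e e = 1"
      unfolding e_def ip_rm wr by (rule quat_eqI) (use ss in \<open>simp_all add: algebra_simps\<close>)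
    have ek: "ip e (es!k) = 0" if "k < m" for k
      using wperp[OF that] by (simp add: e_def ip_rml)
    have ke: "ip (es!k) e = 0" if "k < m" for k
      using ek[OF that] ip_sym[of "es!k" e] by simp
    define es' where "es' = es @ [e]"
    have len': "length es' = Suc m" by (simp add: es'_def m_def)
    have nth': "es'!j = es!j" if "j < m" for j using that by (simp add: es'_def nth_append m_def)
    have nthm: "es'!m = e" by (simp add: es'_def m_def)
    have on': "orthonormal es'"
      unfolding orthonormal_def len'
    proof (intro allI impI)
      fix i j assume i: "i < Suc m" and j: "j < Suc m"
      show "ip (es'!i) (es'!j) = (if i = j then 1 else 0)"
      proof (cases "i < m"; cases "j < m")
        assume "i < m" "j < m" then show ?thesis using on by (simp add: nth' orthonormal_def m_def)
      next
        assume "i < m" "\<not> j < m" then have "j = m" using j by simp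
        then show ?thesis using \<open>i < m\<close> ke by (simp add: nth' nthm)
      next
        assume "\<not> i < m" "j < m" then have "i = m" using i by simp
        then show ?thesis using \<open>j < m\<close> ek by (simp add: nth' nthm)
      next
        assume "\<not> i < m" "\<not> j < m" then have "i = m" "j = m" using i j by simp_all
        then show ?thesis using ee nthm by simp
      qed
    qed
    have ext: "(\<Sum>j<length es'. rm (es'!j) (d j)) = (\<Sum>j<m. rm (es!j) (d j)) + rm e (d m)" for d
      by (simp add: len' nth' nthm)
    have "\<exists>d. v = (\<Sum>j<length es'. rm (es'!j) (d j))" if v: "v \<in> set (u # us)" for v
    proof (cases "v = u")
      case True
      have "rm e (Quat (sqrt r) 0 0 0) = w"
        unfolding e_def rm_mult[symmetric]
        using rpos rm_one[of w] by (simp add: times_quat_def s_def one_quat_def)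
      then have "u = (\<Sum>j<m. rm (es!j) (c j)) + rm e (Quat (sqrt r) 0 0 0)"
        by (simp add: w_def)
      then show ?thesis using True ext[of "\<lambda>j. if j < m then c j else Quat (sqrt r) 0 0 0"]
        by (intro exI[of _ "\<lambda>j. if j < m then c j else Quat (sqrt r) 0 0 0"]) simp
    next
      case False
      then obtain d where "v = (\<Sum>j<m. rm (es!j) (d j))" using v rep by (auto simp: m_def)
      then show ?thesis using ext[of "\<lambda>j. if j < m then d j else 0"]
        by (intro exI[of _ "\<lambda>j. if j < m then d j else 0"]) simp
    qed
    then show ?thesis using on' by blast
  qed
qed

end


lemma fsums_pt: "length xs = n \<Longrightarrow> pt xs \<in> fsums n"
  by (simp add: fsums_iff pt_eq supp_pt1)
lemma fsums_diff: "f \<in> fsums n \<Longrightarrow> g \<in> fsums n \<Longrightarrow> (\<lambda>x. f x - g x) \<in> fsums n"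
  unfolding fsums_iff using supp_diff[of f g] finite_supp_diff by blast
lemma fsums_add: "f \<in> fsums n \<Longrightarrow> g \<in> fsums n \<Longrightarrow> (\<lambda>x. f x + g x) \<in> fsums n"
  unfolding fsums_iff using supp_add[of f g] finite_supp_add by blast
lemma fsums_smul: "f \<in> fsums n \<Longrightarrow> (\<lambda>x. k * f x) \<in> fsums n"
  unfolding fsums_iff using supp_smul[of k f] finite_supp_smul by blast
lemma fsums_sum: "finite J \<Longrightarrow> (\<And>j. j \<in> J \<Longrightarrow> F j \<in> fsums n) \<Longrightarrow> (\<lambda>x. \<Sum>j\<in>J. F j x) \<in> fsums n"
proof -
  assume J: "finite J" and F: "\<And>j. j \<in> J \<Longrightarrow> F j \<in> fsums n"
  have "finite (supp (\<lambda>x. \<Sum>j\<in>J. F j x))"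
    by (rule finite_supp_sum[OF J]) (use F fsums_iff in blast)
  moreover have "\<forall>xs\<in>supp (\<lambda>x. \<Sum>j\<in>J. F j x). length xs = n"
    using supp_sum[of F J] F unfolding fsums_iff by blast
  ultimately show ?thesis by (simp add: fsums_iff)
qed

lemma f_expand: "finite (supp f) \<Longrightarrow> f = (\<lambda>ys. \<Sum>xs\<in>supp f. f xs * pt xs ys)"
proof
  fix ys assume fin: "finite (supp f)"
  have "(\<Sum>xs\<in>supp f. f xs * pt xs ys) = (\<Sum>xs\<in>supp f. if xs = ys then f ys else 0)"
    by (rule sum.cong) (auto simp: pt_def)
  also have "\<dots> = f ys" using fin by (simp add: supp_def)
  finally show "f ys = (\<Sum>xs\<in>supp f. f xs * pt xs ys)" by simp
qed

lemma fpush_Cons_sum: "fpush ((#) e) (\<lambda>ys. \<Sum>x\<in>S. a x * pt (zs x) ys) = (\<lambda>ys. \<Sum>x\<in>S. a x * pt (e # zs x) ys)"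
proof
  fix ys
  let ?F = "\<lambda>ys. \<Sum>x\<in>S. a x * pt (zs x) ys"
  show "fpush ((#) e) ?F ys = (\<Sum>x\<in>S. a x * pt (e # zs x) ys)"
  proof (cases "\<exists>t. ys = e # t")
    case True
    then obtain t where ys: "ys = e # t" by blast
    have "{xs. ?F xs \<noteq> 0 \<and> e # xs = ys} = (if ?F t \<noteq> 0 then {t} else {})" by (auto simp: ys)
    then have "fpush ((#) e) ?F ys = ?F t" by (simp add: fpush_def)
    then show ?thesis by (simp add: ys pt_def)
  next
    case False
    then have "{xs. ?F xs \<noteq> 0 \<and> e # xs = ys} = {}" by auto
    then show ?thesis unfolding fpush_def using False by (auto simp: pt_def intro!: sum.neutral)
  qed
qed

context qhs begin

lemma trel_combine: "A \<in> R n \<Longrightarrow> B \<in> R n \<Longrightarrow> (\<And>ys. C ys = A ys + B ys) \<Longrightarrow> C \<in> R n"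
proof -
  assume "A \<in> R n" "B \<in> R n" "\<And>ys. C ys = A ys + B ys"
  moreover from this have "C = (\<lambda>ys. A ys + B ys)" by auto
  ultimately show ?thesis using trel_add by simp
qed

lemma trel_eqI: "A \<in> R n \<Longrightarrow> (\<And>ys. C ys = A ys) \<Longrightarrow> C \<in> R n"
proof -
  assume "A \<in> R n" "\<And>ys. C ys = A ys"
  moreover from this have "C = A" by auto
  ultimately show ?thesis by simp
qed

lemma pt_zero_trel: "length t = n \<Longrightarrow> pt (0 # t) \<in> R (Suc n)"
  using trel_neg[OF gen1[of "[]" t "Suc n" 0 0]] by (rule trel_eqI) (simp_all add: algebra_simps)

lemma add_first: "finite J \<Longrightarrow> length t = n \<Longrightarrow>
  (\<lambda>ys. pt ((\<Sum>j\<in>J. a j) # t) ys - (\<Sum>j\<in>J. pt (a j # t) ys)) \<in> R (Suc n)"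
proof (induction J rule: finite_induct)
  case empty then show ?case using pt_zero_trel[of t n] by simp
next
  case (insert i J)
  show ?case
    by (rule trel_combine[OF gen1[of "[]" t "Suc n" "a i" "\<Sum>j\<in>J. a j"] insert.IH])
       (use insert in auto)
qed

lemma move_scalar: "length t = n \<Longrightarrow> t \<noteq> [] \<Longrightarrow>
  (\<lambda>ys. pt (rm e c # t) ys - pt (e # lhd lm c t) ys) \<in> R (Suc n)"
  by (cases t) (use gen2[of "[]" "tl t" "Suc n" e c "hd t"] in auto)

lemma int_mult: "(\<lambda>ys. pt [lm (of_int k) x] ys - k * pt [x] ys) \<in> R 1"
proof (induction k rule: int_induct[where k = 0])
  case base
  show ?case using pt_zero_trel[of "[]" 0] by simp
next
  case (step1 i)
  have e: "lm (of_int i + 1) x = lm (of_int i) x + x" by (simp add: lm_addq)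
  have e2: "lm (1 + of_int i) x = x + lm (of_int i) x" by (simp add: lm_addq)
  show ?case
    by (intro trel_combine[OF gen1[of "[]" "[]" 1 "lm (of_int i) x" x] step1(2)]) (simp_all add: algebra_simps e e2)
next
  case (step2 i)
  have e: "lm (of_int i - 1) x + x = lm (of_int i) x" using lm_addq[of "of_int i - 1" 1 x] by simp
  have e2: "x + lm (of_int i - 1) x = lm (of_int i) x" using e by (simp add: add.commute)
  show ?case
    by (intro trel_combine[OF step2(2) trel_neg[OF gen1[of "[]" "[]" 1 "lm (of_int (i - 1)) x" x]]])
      (simp_all add: algebra_simps e e2)
qed

lemma decomp1: "length t = n \<Longrightarrow> t \<noteq> [] \<Longrightarrow> u = (\<Sum>j<m. rm (es!j) (c j)) \<Longrightarrow>
  (\<lambda>ys. pt (u # t) ys - (\<Sum>j<m. pt (es!j # lhd lm (c j) t) ys)) \<in> R (Suc n)"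
  by (rule trel_combine[OF add_first[of "{..<m}" t n "\<lambda>j. rm (es!j) (c j)"]
        trel_sum[of "{..<m}" "\<lambda>j ys. pt (rm (es!j) (c j) # t) ys - pt (es!j # lhd lm (c j) t) ys"]])
     (auto intro: move_scalar simp: sum_subtractf)

end


context qhs begin

lemma pos_base: "f \<in> fsums 1 \<Longrightarrow> qnonneg (Phi 1 f f) \<and> (Phi 1 f f = 0 \<longrightarrow> f \<in> R 1)"
proof -
  assume f: "f \<in> fsums 1"
  define S where "S = supp f"
  have fin: "finite S" and len: "\<And>xs. xs \<in> S \<Longrightarrow> length xs = 1" using f by (auto simp: fsums_iff S_def)
  have xs1: "xs = [hd xs]" if "xs \<in> S" for xs using len[OF that] by (cases xs) auto
  define w where "w = (\<Sum>xs\<in>S. lm (of_int (f xs)) (hd xs))"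
  have A: "(\<lambda>ys. pt [w] ys - (\<Sum>xs\<in>S. pt [lm (of_int (f xs)) (hd xs)] ys)) \<in> R 1"
    using add_first[OF fin, of "[]" 0 "\<lambda>xs. lm (of_int (f xs)) (hd xs)"] unfolding w_def by simp
  have B: "(\<lambda>ys. \<Sum>xs\<in>S. pt [lm (of_int (f xs)) (hd xs)] ys - f xs * pt [hd xs] ys) \<in> R 1"
    by (rule trel_sum[OF fin]) (rule int_mult)
  have fe: "f ys = (\<Sum>xs\<in>S. f xs * pt [hd xs] ys)" for ys
  proof -
    have "f ys = (\<Sum>xs\<in>S. f xs * pt xs ys)" using fun_cong[OF f_expand[of f], of ys] fin unfolding S_def by simp
    also have "\<dots> = (\<Sum>xs\<in>S. f xs * pt [hd xs] ys)"
      by (rule sum.cong) (auto dest: xs1)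
    finally show ?thesis .
  qed
  have D: "(\<lambda>ys. f ys - pt [w] ys) \<in> R 1"
  proof (rule trel_combine[OF trel_neg[OF A] trel_neg[OF B]])
    fix ys show "f ys - pt [w] ys = - (pt [w] ys - (\<Sum>xs\<in>S. pt [lm (of_int (f xs)) (hd xs)] ys)) +
      - (\<Sum>xs\<in>S. pt [lm (of_int (f xs)) (hd xs)] ys - f xs * pt [hd xs] ys)"
      using fe[of ys] by (simp add: sum_subtractf)
  qed
  have wf: "pt [w] \<in> fsums 1" by (simp add: fsums_pt)
  have eq: "Phi 1 f f = ip w w"
    using Phi_cong[OF wf wf D D] by (simp add: Phi_pt)
  show ?thesis
  proof
    show "qnonneg (Phi 1 f f)" by (simp add: eq ip_nonneg)
    show "Phi 1 f f = 0 \<longrightarrow> f \<in> R 1"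
    proof
      assume "Phi 1 f f = 0"
      then have "w = 0" using eq ip_def0 by simp
      then show "f \<in> R 1"
      proof -
        have z: "pt [0] \<in> R 1" using pt_zero_trel[of "[]" 0] by simp
        show ?thesis using trel_combine[OF D z] \<open>w = 0\<close> by simp
      qed
    qed
  qed
qed

lemma Phi_Cons: "finite (supp T) \<Longrightarrow> finite (supp U) \<Longrightarrow>
  Phi 1 (fpush ((#) a) T) (fpush ((#) b) U) = Phi (ip a b) T U"
  by (subst Phi_fpush) (simp_all add: Phi_def)

lemma pos_step:
  assumes n: "1 \<le> n"
    and IH: "\<And>T. T \<in> fsums n \<Longrightarrow> qnonneg (Phi 1 T T) \<and> (Phi 1 T T = 0 \<longrightarrow> T \<in> R n)"
    and f: "f \<in> fsums (Suc n)"
  shows "qnonneg (Phi 1 f f) \<and> (Phi 1 f f = 0 \<longrightarrow> f \<in> R (Suc n))"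
proof -
  define S where "S = supp f"
  have fin: "finite S" and len: "\<And>xs. xs \<in> S \<Longrightarrow> length xs = Suc n" using f by (auto simp: fsums_iff S_def)
  obtain us where us: "set us = hd ` S" using finite_list[of "hd ` S"] fin by blast
  obtain es where on: "orthonormal es" and rep: "\<forall>u\<in>set us. \<exists>c. u = (\<Sum>j<length es. rm (es!j) (c j))"
    using gram_schmidt by blast
  define m where "m = length es"
  have ex: "\<forall>xs\<in>S. \<exists>c. hd xs = (\<Sum>j<m. rm (es!j) (c j))" using rep us m_def by auto
  obtain C where C: "\<And>xs. xs \<in> S \<Longrightarrow> hd xs = (\<Sum>j<m. rm (es!j) (C xs j))"
    using bchoice[OF ex] by blast
  define T where "T j = (\<lambda>ys. \<Sum>xs\<in>S. f xs * pt (lhd lm (C xs j) (tl xs)) ys)" for j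
  define g where "g = (\<lambda>ys. \<Sum>j<m. \<Sum>xs\<in>S. f xs * pt (es!j # lhd lm (C xs j) (tl xs)) ys)"
  have Tf: "T j \<in> fsums n" for j
    unfolding T_def by (rule fsums_sum[OF fin], rule fsums_smul, rule fsums_pt) (simp add: len)
  have Tfin: "finite (supp (T j))" for j using Tf fsums_iff by blast
  have g2: "g = (\<lambda>ys. \<Sum>j<m. fpush ((#) (es!j)) (T j) ys)"
    unfolding g_def T_def fpush_Cons_sum by simp
  have fg: "(\<lambda>ys. f ys - g ys) \<in> R (Suc n)"
  proof (rule trel_eqI)
    show "(\<lambda>ys. \<Sum>xs\<in>S. f xs * (pt (hd xs # tl xs) ys - (\<Sum>j<m. pt (es!j # lhd lm (C xs j) (tl xs)) ys))) \<in> R (Suc n)"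
    proof (rule trel_sum[OF fin], rule trel_smul, rule decomp1)
      fix xs assume xs: "xs \<in> S"
      show "length (tl xs) = n" using len[OF xs] by simp
      show "tl xs \<noteq> []" using len[OF xs] n by (cases xs) auto
      show "hd xs = (\<Sum>j<m. rm (es!j) (C xs j))" using C[OF xs] .
    qed
  next
    fix ys
    have "f ys = (\<Sum>xs\<in>S. f xs * pt xs ys)" using fun_cong[OF f_expand[of f], of ys] fin unfolding S_def by simp
    also have "\<dots> = (\<Sum>xs\<in>S. f xs * pt (hd xs # tl xs) ys)"
    proof (rule sum.cong[OF refl])
      fix xs assume "xs \<in> S" then have "xs \<noteq> []" using len by fastforce
      then show "f xs * pt xs ys = f xs * pt (hd xs # tl xs) ys" by simp
    qed
    finally have "f ys = (\<Sum>xs\<in>S. f xs * pt (hd xs # tl xs) ys)" .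
    moreover have "g ys = (\<Sum>xs\<in>S. f xs * (\<Sum>j<m. pt (es!j # lhd lm (C xs j) (tl xs)) ys))"
      unfolding g_def sum_distrib_left by (rule sum.swap)
    ultimately show "f ys - g ys = (\<Sum>xs\<in>S. f xs * (pt (hd xs # tl xs) ys - (\<Sum>j<m. pt (es!j # lhd lm (C xs j) (tl xs)) ys)))"
      by (simp add: right_diff_distrib sum_subtractf)
  qed
  have gf: "g \<in> fsums (Suc n)"
  proof -
    have "(\<lambda>ys. f ys - (f ys - g ys)) \<in> fsums (Suc n)"
      using fsums_diff[OF f trel_fsums[OF fg]] .
    then show ?thesis by simp
  qed
  have pfin: "finite (supp (fpush ((#) (es!j)) (T j)))" for j using finite_supp_fpush Tfin by blast
  have "Phi 1 f f = Phi 1 g g"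
    using Phi_cong[OF gf gf fg fg] .
  also have "\<dots> = (\<Sum>j<m. \<Sum>k<m. Phi (ip (es!j) (es!k)) (T j) (T k))"
  proof -
    let ?P = "\<lambda>j. fpush ((#) (es!j)) (T j)"
    have "Phi 1 g g = (\<Sum>j<m. Phi 1 (?P j) g)"
      unfolding g2 by (rule Phi_suml) (simp_all add: pfin)
    also have "\<dots> = (\<Sum>j<m. \<Sum>k<m. Phi 1 (?P j) (?P k))"
      unfolding g2 by (rule sum.cong[OF refl], rule Phi_sumr) (simp_all add: pfin)
    also have "\<dots> = (\<Sum>j<m. \<Sum>k<m. Phi (ip (es!j) (es!k)) (T j) (T k))"
      by (simp add: Phi_Cons Tfin)
    finally show ?thesis .
  qed
  also have "\<dots> = (\<Sum>j<m. Phi 1 (T j) (T j))"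
  proof (rule sum.cong, simp)
    fix j assume j: "j \<in> {..<m}"
    have "(\<Sum>k<m. Phi (ip (es!j) (es!k)) (T j) (T k)) = (\<Sum>k<m. if k = j then Phi 1 (T j) (T k) else 0)"
      by (rule sum.cong) (use on j in \<open>auto simp: orthonormal_def m_def\<close>)
    also have "\<dots> = Phi 1 (T j) (T j)" using j by simp
    finally show "(\<Sum>k<m. Phi (ip (es!j) (es!k)) (T j) (T k)) = Phi 1 (T j) (T j)" .
  qed
  finally have eq: "Phi 1 f f = (\<Sum>j<m. Phi 1 (T j) (T j))" .
  have nn: "qnonneg (Phi 1 (T j) (T j))" for j using IH[OF Tf] by blast
  show ?thesis
  proof
    show "qnonneg (Phi 1 f f)" unfolding eq by (rule qnonneg_sum) (rule nn)
    show "Phi 1 f f = 0 \<longrightarrow> f \<in> R (Suc n)"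
    proof
      assume z: "Phi 1 f f = 0"
      have "T j \<in> R n" if "j < m" for j
        using qnonneg_sum_zero[of "{..<m}" "\<lambda>j. Phi 1 (T j) (T j)" j] nn z eq that IH[OF Tf] by auto
      then have "g \<in> R (Suc n)" unfolding g2
        by (intro trel_sum) (auto intro: trel_fpush_Cons)
      then show "f \<in> R (Suc n)" using trel_combine[OF fg] by simp
    qed
  qed
qed

lemma pos: "1 \<le> n \<Longrightarrow> f \<in> fsums n \<Longrightarrow> qnonneg (Phi 1 f f) \<and> (Phi 1 f f = 0 \<longrightarrow> f \<in> R n)"
proof (induction n arbitrary: f rule: nat_induct_at_least)
  case base then show ?case using pos_base by simp
next
  case (Suc n) then show ?case using pos_step by blast
qed

end


context qhs begin

definition Bf :: "('v list \<Rightarrow> int) set \<Rightarrow> ('v list \<Rightarrow> int) set \<Rightarrow> quat" where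
  "Bf X Y = Phi 1 (SOME f. f \<in> X) (SOME g. g \<in> Y)"

lemma B_tcls: "f \<in> fsums n \<Longrightarrow> g \<in> fsums n \<Longrightarrow> Bf (tcls lm rm n f) (tcls lm rm n g) = Phi 1 f g"
proof -
  assume f: "f \<in> fsums n" and g: "g \<in> fsums n"
  have sf: "(SOME h. h \<in> tcls lm rm n f) \<in> tcls lm rm n f" by (rule someI_ex[of "\<lambda>h. h \<in> tcls lm rm n f"]) (blast intro: tcls_self)
  have sg: "(SOME h. h \<in> tcls lm rm n g) \<in> tcls lm rm n g" by (rule someI_ex[of "\<lambda>h. h \<in> tcls lm rm n g"]) (blast intro: tcls_self)
  show ?thesis unfolding Bf_def by (rule Phi_cong[OF f g tcls_mem[OF sf] tcls_mem[OF sg]])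
qed

lemma tpow_E: "X \<in> tpow lm rm n \<Longrightarrow> (\<And>f. f \<in> fsums n \<Longrightarrow> X = tcls lm rm n f \<Longrightarrow> P) \<Longrightarrow> P"
  unfolding tpow_def by blast

lemma tadd_tcls: "tadd (tcls lm rm n f) (tcls lm rm n g) = tcls lm rm n (\<lambda>x. f x + g x)"
proof (rule set_eqI)
  fix h
  show "h \<in> tadd (tcls lm rm n f) (tcls lm rm n g) \<longleftrightarrow> h \<in> tcls lm rm n (\<lambda>x. f x + g x)"
  proof
    assume "h \<in> tadd (tcls lm rm n f) (tcls lm rm n g)"
    then obtain f' g' where h: "h = (\<lambda>x. f' x + g' x)" and f': "f' \<in> tcls lm rm n f" and g': "g' \<in> tcls lm rm n g"
      unfolding tadd_def by blast
    have "(\<lambda>x. h x - (f x + g x)) \<in> R n"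
      by (rule trel_combine[OF tcls_mem[OF f'] tcls_mem[OF g']]) (simp add: h)
    then show "h \<in> tcls lm rm n (\<lambda>x. f x + g x)" by (simp add: tcls_def)
  next
    assume h: "h \<in> tcls lm rm n (\<lambda>x. f x + g x)"
    have "(\<lambda>x. h x - g x) \<in> tcls lm rm n f"
      using tcls_mem[OF h] by (simp add: tcls_def algebra_simps)
    moreover have "g \<in> tcls lm rm n g" by (rule tcls_self)
    moreover have "h = (\<lambda>x. (h x - g x) + g x)" by simp
    ultimately show "h \<in> tadd (tcls lm rm n f) (tcls lm rm n g)" unfolding tadd_def
      by (intro CollectI exI[of _ "\<lambda>x. h x - g x"] exI[of _ g]) simp
  qed
qed

lemma fsums_fpush: "(\<And>xs. length (h xs) = length xs) \<Longrightarrow> f \<in> fsums n \<Longrightarrow> fpush h f \<in> fsums n"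
  unfolding fsums_iff using supp_fpush[of h f] finite_supp_fpush by fastforce

lemma trm_tcls: "f \<in> fsums n \<Longrightarrow> trm lm rm n (tcls lm rm n f) a = tcls lm rm n (fpush (rlst rm a) f)"
  unfolding trm_def by (rule tcls_fpush) (auto intro: trel_fpush_rlst)

lemma tlm_tcls: "f \<in> fsums n \<Longrightarrow> tlm lm rm n a (tcls lm rm n f) = tcls lm rm n (fpush (lhd lm a) f)"
  unfolding tlm_def by (rule tcls_fpush) (auto intro: trel_fpush_lhd)

lemma Phi_fpushl: "finite (supp f) \<Longrightarrow> Phi q (fpush h f) g = lin (\<lambda>xs. lin (\<lambda>ys. G q (h xs) ys) g) f"
  unfolding Phi_def by (simp add: lin_fpush)
lemma Phi_fpushr: "finite (supp g) \<Longrightarrow> Phi q f (fpush k g) = lin (\<lambda>xs. lin (\<lambda>ys. G q xs (k ys)) g) f"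
  unfolding Phi_def by (simp add: lin_fpush)

lemma main:
  assumes n: "n \<ge> 1"
  shows "\<exists>B. (\<forall>us vs. length us = n \<longrightarrow> length vs = n \<longrightarrow>
               B (tens lm rm n us) (tens lm rm n vs) = tformula lm ip us vs)
           \<and> is_qip (tpow lm rm n) tadd (tzero lm rm n) (trm lm rm n) B
           \<and> (\<forall>x\<in>tpow lm rm n. \<forall>y\<in>tpow lm rm n. \<forall>a.
                B x (tlm lm rm n a y) = B (tlm lm rm n (qcnj a) x) y)"
proof (intro exI[of _ Bf] conjI)
  show "\<forall>us vs. length us = n \<longrightarrow> length vs = n \<longrightarrow> Bf (tens lm rm n us) (tens lm rm n vs) = tformula lm ip us vs"
  proof (intro allI impI)
    fix us vs :: "'v list" assume us: "length us = n" and vs: "length vs = n"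
    have "us \<noteq> []" "vs \<noteq> []" using us vs n by auto
    then show "Bf (tens lm rm n us) (tens lm rm n vs) = tformula lm ip us vs"
      unfolding tens_def using B_tcls[OF fsums_pt[OF us] fsums_pt[OF vs]] by (simp add: Phi_pt tformula_G)
  qed
  have fin: "f \<in> fsums n \<Longrightarrow> finite (supp f)" for f using fsums_iff by blast
  show "is_qip (tpow lm rm n) tadd (tzero lm rm n) (trm lm rm n) Bf"
    unfolding is_qip_def
  proof (intro conjI ballI allI)
    fix X Y Z assume X: "X \<in> tpow lm rm n" and Y: "Y \<in> tpow lm rm n" and Z: "Z \<in> tpow lm rm n"
    obtain f g h where f: "f \<in> fsums n" and g: "g \<in> fsums n" and h: "h \<in> fsums n"
      and XYZ: "X = tcls lm rm n f" "Y = tcls lm rm n g" "Z = tcls lm rm n h"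
      using X Y Z by (meson tpow_E)
    show "Bf (tadd X Y) Z = Bf X Z + Bf Y Z"
      unfolding XYZ tadd_tcls using f g h fsums_add[OF f g]
      by (simp add: B_tcls Phi_addl fin)
    show "Bf X (tadd Y Z) = Bf X Y + Bf X Z"
      unfolding XYZ tadd_tcls using f g h fsums_add[OF g h]
      by (simp add: B_tcls Phi_addr fin)
  next
    fix X Y a b assume X: "X \<in> tpow lm rm n" and Y: "Y \<in> tpow lm rm n"
    obtain f g where f: "f \<in> fsums n" and g: "g \<in> fsums n"
      and XY: "X = tcls lm rm n f" "Y = tcls lm rm n g"
      using X Y by (meson tpow_E)
    have lf: "fpush (rlst rm a) f \<in> fsums n" by (rule fsums_fpush[OF _ f]) simp
    have lg: "fpush (rlst rm b) g \<in> fsums n" by (rule fsums_fpush[OF _ g]) simp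
    have "Bf (trm lm rm n X a) (trm lm rm n Y b) = Phi 1 (fpush (rlst rm a) f) (fpush (rlst rm b) g)"
      unfolding XY trm_tcls[OF f] trm_tcls[OF g] by (rule B_tcls[OF lf lg])
    also have "\<dots> = lin (\<lambda>xs. lin (\<lambda>ys. G 1 (rlst rm a xs) (rlst rm b ys)) g) f"
      by (rule Phi_fpush) (simp_all add: fin f g)
    also have "\<dots> = lin (\<lambda>xs. lin (\<lambda>ys. qcnj b * G 1 xs ys * a) g) f"
    proof (rule lin_cong, rule lin_cong)
      fix xs ys assume "xs \<in> supp f" "ys \<in> supp g"
      then have "length xs = n" "length ys = n" using f g fsums_iff by blast+
      then show "G 1 (rlst rm a xs) (rlst rm b ys) = qcnj b * G 1 xs ys * a"
        using n by (intro G_rlst) auto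
    qed
    also have "\<dots> = qcnj b * Bf X Y * a"
      unfolding XY B_tcls[OF f g] Phi_def by (simp add: lin_Lmult_left lin_Lmult_right)
    finally show "Bf (trm lm rm n X a) (trm lm rm n Y b) = qcnj b * Bf X Y * a" .
  next
    fix X Y assume X: "X \<in> tpow lm rm n" and Y: "Y \<in> tpow lm rm n"
    obtain f g where f: "f \<in> fsums n" and g: "g \<in> fsums n"
      and XY: "X = tcls lm rm n f" "Y = tcls lm rm n g"
      using X Y by (meson tpow_E)
    show "Bf Y X = qcnj (Bf X Y)"
      unfolding XY B_tcls[OF f g] B_tcls[OF g f] using Phi_sym[of 1 g f] by simp
  next
    fix X assume X: "X \<in> tpow lm rm n"
    obtain f where f: "f \<in> fsums n" and XY: "X = tcls lm rm n f"
      using X by (meson tpow_E)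
    have p: "qnonneg (Phi 1 f f) \<and> (Phi 1 f f = 0 \<longrightarrow> f \<in> R n)" by (rule pos[OF n f])
    show "qnonneg (Bf X X)" using p unfolding XY B_tcls[OF f f] by blast
    show "Bf X X = 0 \<longrightarrow> X = tzero lm rm n"
    proof
      assume "Bf X X = 0"
      then have "f \<in> R n" using p unfolding XY B_tcls[OF f f] by blast
      then show "X = tzero lm rm n" unfolding XY tzero_def by (intro tcls_eq) simp
    qed
  qed
  show "\<forall>x\<in>tpow lm rm n. \<forall>y\<in>tpow lm rm n. \<forall>a. Bf x (tlm lm rm n a y) = Bf (tlm lm rm n (qcnj a) x) y"
  proof (intro ballI allI)
    fix X Y a assume X: "X \<in> tpow lm rm n" and Y: "Y \<in> tpow lm rm n"
    obtain f g where f: "f \<in> fsums n" and g: "g \<in> fsums n"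
      and XY: "X = tcls lm rm n f" "Y = tcls lm rm n g"
      using X Y by (meson tpow_E)
    have lf: "fpush (lhd lm (qcnj a)) f \<in> fsums n" by (rule fsums_fpush[OF _ f]) simp
    have lg: "fpush (lhd lm a) g \<in> fsums n" by (rule fsums_fpush[OF _ g]) simp
    have "Bf X (tlm lm rm n a Y) = lin (\<lambda>xs. lin (\<lambda>ys. G 1 xs (lhd lm a ys)) g) f"
      unfolding XY tlm_tcls[OF g] B_tcls[OF f lg] by (rule Phi_fpushr) (simp add: fin g)
    also have "\<dots> = lin (\<lambda>xs. lin (\<lambda>ys. G 1 (lhd lm (qcnj a) xs) ys) g) f"
      by (simp add: G_lhd)
    also have "\<dots> = Bf (tlm lm rm n (qcnj a) X) Y"
      unfolding XY tlm_tcls[OF f] B_tcls[OF lf g] by (rule Phi_fpushl[symmetric]) (simp add: fin f)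
    finally show "Bf X (tlm lm rm n a Y) = Bf (tlm lm rm n (qcnj a) X) Y" .
  qed
qed

end


theorem proposition4p2:
  fixes lm :: "quat \<Rightarrow> 'v::ab_group_add \<Rightarrow> 'v"
    and rm :: "'v \<Rightarrow> quat \<Rightarrow> 'v"
    and ip :: "'v \<Rightarrow> 'v \<Rightarrow> quat"
    and n :: nat
  assumes "two_sided_qhs lm rm ip"
    and "\<forall>u v a. ip u (lm a v) = ip (lm (qcnj a) u) v"
    and "n \<ge> 1"
  shows "\<exists>B. (\<forall>us vs. length us = n \<longrightarrow> length vs = n \<longrightarrow>
               B (tens lm rm n us) (tens lm rm n vs) = tformula lm ip us vs)
           \<and> is_qip (tpow lm rm n) tadd (tzero lm rm n) (trm lm rm n) B
           \<and> (\<forall>x\<in>tpow lm rm n. \<forall>y\<in>tpow lm rm n. \<forall>a.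
                B x (tlm lm rm n a y) = B (tlm lm rm n (qcnj a) x) y)"
proof -
  interpret qhs lm rm ip using assms(1,2) by unfold_locales
  show ?thesis using main[OF assms(3)] .
qed

end
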